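(* Let $M>0$, $l,p\in\mathbb N$, and $0<\lambda<\min\{1,1/\widetilde M\}$ where $\widetilde M=\sum_{j=0}^pM^j$. Consider the SigSAS state map $F^{\rm SigSAS}_{\lambda,l,p}:T^{l+1}(\mathbb R^{p+1})\times\mathbb R\to T^{l+1}(\mathbb R^{p+1})$, $F^{\rm SigSAS}_{\lambda,l,p}(\mathbf x,z)=\lambda\pi_l(\mathbf x)\otimes\widetilde{\mathbf z}+\widehat{\mathbf z}^0$, with inputs $z\in[-M,M]$. Then: (1) for all $\mathbf x_1,\mathbf x_2$ and $z\in[-M,M]$, $\|F^{\rm SigSAS}_{\lambda,l,p}(\mathbf x_1,z)-F^{\rm SigSAS}_{\lambda,l,p}(\mathbf x_2,z)\|\le\lambda\widetilde M\|\mathbf x_1-\mathbf x_2\|$, with $\lambda\widetilde M<1$; (2) with $L:=\widetilde M/(1-\lambda\widetilde M)$, $F^{\rm SigSAS}_{\lambda,l,p}$ maps $\overline{B(\mathbf 0,L)}\times[-M,M]$ into $\overline{B(\mathbf 0,L)}$; (3) the state system $\mathbf x_t=F^{\rm SigSAS}_{\lambda,l,p}(\mathbf x_{t-1},z_t)$ with inputs in $K_M=[-M,M]^{\mathbb Z_-}$ has the echo state property and the fading memory property, and its (continuous, causal, time-invariant) filter $U^{\rm SigSAS}_{\lambda,l,p}:K_M\to K_L$ is given, for $\mathbf z\in K_M$, $t\in\mathbb Z_-$, by $$U^{\rm SigSAS}_{\lambda,l,p}(\mathbf z)_t=\frac{\lambda^{l+1}}{1-\lambda}\widehat{\mathbf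 z}_t+\sum_{j=0}^{l}\lambda^j\Phi_j(\mathbf z)_t,$$ where $\Phi_j(\mathbf z)_t:=\Psi^{(j)}$ is defined recursively by $\Psi^{(0)}=\widehat{\mathbf z}^0_{t-j}$ and $\Psi^{(r)}=\pi_l(\Psi^{(r-1)})\otimes\widetilde{\mathbf z}_{t-j+r}$ for $r=1,\dots,j$ (so $\Phi_0(\mathbf z)_t=\widehat{\mathbf z}^0_t$, $\Phi_1(\mathbf z)_t=\pi_l(\widehat{\mathbf z}^0_{t-1})\otimes\widetilde{\mathbf z}_t$, etc.).
   Context: $\mathbb Z_-=\{\dots,-1,0\}$. $T^{l+1}(\mathbb R^{p+1})=(\mathbb R^{p+1})^{\otimes(l+1)}$ with canonical basis $\mathbf e_{i_1}\otimes\cdots\otimes\mathbf e_{i_{l+1}}$, $i_r\in\{1,\dots,p+1\}$ ($\mathbf e_i$ the canonical basis of $\mathbb R^{p+1}$), endowed with the Euclidean norm of the coefficient array (the norm of the inner product making the canonical basis orthonormal; a crossnorm); $B(\mathbf 0,L)$ denotes balls in this norm. The order-lowering map $\pi_l:T^{l+1}(\mathbb R^{p+1})\to T^{l}(\mathbb R^{p+1})$ is linear with $\pi_l(\sum a_{i_1\dots i_{l+1}}\mathbf e_{i_1}\otimes\cdots\otimes\mathbf e_{i_{l+1}})=\sum a_{1,i_2\dots i_{l+1}}\mathbf e_{i_2}\otimes\cdots\otimes\mathbf e_{i_{l+1}}$. For $z\in\mathbb R$, $\widetilde{\mathbf z}:=\sum_{i=1}^{p+1}z^{i-1}\mathbf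 e_i\in\mathbb R^{p+1}$; for a sequence $\mathbf z=(z_t)_{t\in\mathbb Z_-}$, $\widetilde{\mathbf z}_t$ is this vector for $z_t$ and $\widehat{\mathbf z}_t:=\widetilde{\mathbf z}_{t-l}\otimes\cdots\otimes\widetilde{\mathbf z}_t\in T^{l+1}(\mathbb R^{p+1})$. A set $I_0\subset\{1,\dots,p+1\}$ with $1\in I_0$ and cardinality $>1$ is fixed, and $\widehat{\mathbf z}^0:=\sum_{i\in I_0}z^{i-1}\mathbf e_1\otimes\cdots\otimes\mathbf e_1\otimes\mathbf e_i$ ($l$ factors $\mathbf e_1$), with $\widehat{\mathbf z}^0_t$ the same expression for $z_t$. A state map $F$ has the echo state property (ESP) on inputs $K_M$ if for every $\mathbf z\in K_M$ there is a unique state sequence $(\mathbf x_t)_{t\in\mathbb Z_-}$ in the state space with $\mathbf x_t=F(\mathbf x_{t-1},z_t)$ for all $t$; the associated filter maps $\mathbf z$ to this sequence. The fading memory property (FMP) means continuity of the filter w.r.t. product topologies. $K_L$ denotes sequences with all terms of norm $\le L$. *)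

theory Defs
  imports "HOL-Analysis.Analysis"
begin

text \<open>Tensors in T^k(R^(p+1)) are represented as coefficient arrays
  nat list => real, indexed by lists of length k with entries in {1..p+1}
  (1-based, as in the paper), and vanishing outside this index set.\<close>

definition idx :: "nat \<Rightarrow> nat \<Rightarrow> nat list set" where
  "idx p k = {ix. length ix = k \<and> set ix \<subseteq> {1..p+1}}"

definition tens :: "nat \<Rightarrow> nat \<Rightarrow> (nat list \<Rightarrow> real) set" where
  "tens p k = {a. \<forall>ix. ix \<notin> idx p k \<longrightarrow> a ix = 0}"

definition tnorm :: "nat \<Rightarrow> nat \<Rightarrow> (nat list \<Rightarrow> real) \<Rightarrow> real" where
  "tnorm p k a = sqrt (\<Sum>ix\<in>idx p k. (a ix)\<^sup>2)"

definition pi_low :: "(nat list \<Rightarrow> real) \<Rightarrow> nat list \<Rightarrow> real" where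
  "pi_low a = (\<lambda>ix. a (1 # ix))"

definition tprod :: "(nat list \<Rightarrow> real) \<Rightarrow> (nat \<Rightarrow> real) \<Rightarrow> nat list \<Rightarrow> real" where
  "tprod a v = (\<lambda>ix. if ix = [] then 0 else a (butlast ix) * v (last ix))"

definition ztil :: "nat \<Rightarrow> real \<Rightarrow> nat \<Rightarrow> real" where
  "ztil p z = (\<lambda>i. if i \<in> {1..p+1} then z ^ (i - 1) else 0)"

definition zhat0 :: "nat \<Rightarrow> nat set \<Rightarrow> real \<Rightarrow> nat list \<Rightarrow> real" where
  "zhat0 l I0 z = (\<lambda>ix. if length ix = l + 1 \<and> (\<forall>r<l. ix ! r = 1) \<and> ix ! l \<in> I0
                         then z ^ (ix ! l - 1) else 0)"

definition zhat :: "nat \<Rightarrow> nat \<Rightarrow> (int \<Rightarrow> real) \<Rightarrow> int \<Rightarrow> nat list \<Rightarrow> real" where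
  "zhat p l z t = (\<lambda>ix. if ix \<in> idx p (l + 1)
                         then (\<Prod>r<l + 1. (z (t - int l + int r)) ^ (ix ! r - 1)) else 0)"

definition FSig :: "real \<Rightarrow> nat \<Rightarrow> nat \<Rightarrow> nat set \<Rightarrow> (nat list \<Rightarrow> real) \<Rightarrow> real \<Rightarrow> nat list \<Rightarrow> real" where
  "FSig lam p l I0 x z = (\<lambda>ix. lam * tprod (pi_low x) (ztil p z) ix + zhat0 l I0 z ix)"

definition Mtil :: "real \<Rightarrow> nat \<Rightarrow> real" where
  "Mtil M p = (\<Sum>j\<le>p. M ^ j)"

fun Psi :: "nat \<Rightarrow> nat \<Rightarrow> nat set \<Rightarrow> (int \<Rightarrow> real) \<Rightarrow> int \<Rightarrow> nat \<Rightarrow> nat \<Rightarrow> nat list \<Rightarrow> real" where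
  "Psi p l I0 z t j 0 = zhat0 l I0 (z (t - int j))"
| "Psi p l I0 z t j (Suc r) = tprod (pi_low (Psi p l I0 z t j r)) (ztil p (z (t - int j + int (Suc r))))"

definition Phi :: "nat \<Rightarrow> nat \<Rightarrow> nat set \<Rightarrow> nat \<Rightarrow> (int \<Rightarrow> real) \<Rightarrow> int \<Rightarrow> nat list \<Rightarrow> real" where
  "Phi p l I0 j z t = Psi p l I0 z t j j"

text \<open>Sequences indexed by Z_- are represented as functions on int that vanish for t > 0.\<close>
definition USig :: "real \<Rightarrow> nat \<Rightarrow> nat \<Rightarrow> nat set \<Rightarrow> (int \<Rightarrow> real) \<Rightarrow> int \<Rightarrow> nat list \<Rightarrow> real" where
  "USig lam p l I0 z t = (if 0 < t then (\<lambda>ix. 0) else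
     (\<lambda>ix. lam ^ (l + 1) / (1 - lam) * zhat p l z t ix + (\<Sum>j\<le>l. lam ^ j * Phi p l I0 j z t ix)))"

definition KM :: "real \<Rightarrow> (int \<Rightarrow> real) set" where
  "KM M = {z. \<forall>t. (t \<le> 0 \<longrightarrow> \<bar>z t\<bar> \<le> M) \<and> (0 < t \<longrightarrow> z t = 0)}"

definition KL :: "nat \<Rightarrow> nat \<Rightarrow> real \<Rightarrow> (int \<Rightarrow> nat list \<Rightarrow> real) set" where
  "KL p k L = {x. \<forall>t. (t \<le> 0 \<longrightarrow> x t \<in> tens p k \<and> tnorm p k (x t) \<le> L)
                     \<and> (0 < t \<longrightarrow> x t = (\<lambda>ix. 0))}"

definition is_solution :: "((nat list \<Rightarrow> real) \<Rightarrow> real \<Rightarrow> nat list \<Rightarrow> real) \<Rightarrow> nat \<Rightarrow> nat \<Rightarrow> real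
    \<Rightarrow> (int \<Rightarrow> real) \<Rightarrow> (int \<Rightarrow> nat list \<Rightarrow> real) \<Rightarrow> bool" where
  "is_solution F p k L z x \<longleftrightarrow> x \<in> KL p k L \<and> (\<forall>t\<le>0. x t = F (x (t - 1)) (z t))"

definition has_ESP :: "((nat list \<Rightarrow> real) \<Rightarrow> real \<Rightarrow> nat list \<Rightarrow> real) \<Rightarrow> nat \<Rightarrow> nat \<Rightarrow> real
    \<Rightarrow> (int \<Rightarrow> real) set \<Rightarrow> bool" where
  "has_ESP F p k L K \<longleftrightarrow> (\<forall>z\<in>K. \<exists>!x. is_solution F p k L z x)"

definition tshift :: "'a \<Rightarrow> nat \<Rightarrow> (int \<Rightarrow> 'a) \<Rightarrow> int \<Rightarrow> 'a" where
  "tshift d tau z = (\<lambda>t. if t \<le> 0 then z (t - int tau) else d)"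

end

theory Submission
  imports Defs
begin

lemma tnorm_L2: "tnorm p k a = L2_set a (idx p k)"
  by (simp add: tnorm_def L2_set_def)

definition vnorm :: "nat \<Rightarrow> (nat \<Rightarrow> real) \<Rightarrow> real" where
  "vnorm p v = L2_set v {1..p+1}"

lemma finite_idx[simp]: "finite (idx p k)"
proof -
  have "idx p k = {xs. set xs \<subseteq> {1..p+1} \<and> length xs = k}" by (auto simp: idx_def)
  thus ?thesis using finite_lists_length_eq[of "{1..p+1}" k] by simp
qed

lemma idx_Suc_bij: "bij_betw (\<lambda>(xs,i). xs @ [i]) (idx p k \<times> {1..p+1}) (idx p (Suc k))"
proof (rule bij_betwI')
  fix x y assume "x \<in> idx p k \<times> {1..p + 1}" "y \<in> idx p k \<times> {1..p + 1}"
  show "((case x of (xs, i) \<Rightarrow> xs @ [i]) = (case y of (xs, i) \<Rightarrow> xs @ [i])) = (x = y)"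
    by (cases x; cases y) simp
next
  fix x assume "x \<in> idx p k \<times> {1..p + 1}"
  then show "(case x of (xs, i) \<Rightarrow> xs @ [i]) \<in> idx p (Suc k)"
    by (cases x) (simp add: idx_def)
next
  fix y assume y: "y \<in> idx p (Suc k)"
  then have ne: "y \<noteq> []" by (auto simp: idx_def)
  then have e: "y = butlast y @ [last y]" by simp
  have s: "set y \<subseteq> {1..p+1}" "length y = Suc k" using y by (auto simp: idx_def)
  have "set (butlast y) \<subseteq> {1..p+1}" using s(1) in_set_butlastD by fast
  then have "butlast y \<in> idx p k" using s(2) by (simp add: idx_def)
  moreover have "last y \<in> {1..p+1}" using s(1) last_in_set[OF ne] by blast
  ultimately show "\<exists>x\<in>idx p k \<times> {1..p + 1}. y = (case x of (xs, i) \<Rightarrow> xs @ [i])"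
    using e by (intro bexI[of _ "(butlast y, last y)"]) auto
qed

lemma tnorm_tprod: "tnorm p (Suc k) (tprod a v) = tnorm p k a * vnorm p v"
proof -
  have "(\<Sum>ix\<in>idx p (Suc k). (tprod a v ix)\<^sup>2) = (\<Sum>(xs,i)\<in>idx p k \<times> {1..p+1}. (tprod a v (xs@[i]))\<^sup>2)"
    using sum.reindex_bij_betw[OF idx_Suc_bij[of p k], of "\<lambda>ix. (tprod a v ix)\<^sup>2"]
    by (simp add: case_prod_unfold)
  also have "\<dots> = (\<Sum>(xs,i)\<in>idx p k \<times> {1..p+1}. (a xs)\<^sup>2 * (v i)\<^sup>2)"
    by (simp add: tprod_def power_mult_distrib)
  also have "\<dots> = (\<Sum>xs\<in>idx p k. (a xs)\<^sup>2) * (\<Sum>i\<in>{1..p+1}. (v i)\<^sup>2)"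
    by (simp only: sum_product sum.cartesian_product case_prod_unfold)
  finally show ?thesis
    unfolding tnorm_def vnorm_def L2_set_def by (simp only: real_sqrt_mult)
qed

lemma tnorm_pi_low: "tnorm p k (pi_low a) \<le> tnorm p (Suc k) a"
proof -
  have "(\<Sum>ix\<in>idx p k. (pi_low a ix)\<^sup>2) = (\<Sum>ix\<in>Cons 1 ` idx p k. (a ix)\<^sup>2)"
    by (simp add: sum.reindex pi_low_def)
  also have "\<dots> \<le> (\<Sum>ix\<in>idx p (Suc k). (a ix)\<^sup>2)"
    by (rule sum_mono2) (simp, auto simp: idx_def)
  finally show ?thesis by (simp add: tnorm_def)
qed

lemma tnorm_nonneg[simp]: "0 \<le> tnorm p k a" by (simp add: tnorm_L2)

lemma tnorm_add: "tnorm p k (\<lambda>ix. a ix + b ix) \<le> tnorm p k a + tnorm p k b"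
  by (simp add: tnorm_L2 L2_set_triangle_ineq)

lemma tnorm_diff: "tnorm p k (\<lambda>ix. a ix - b ix) \<le> tnorm p k a + tnorm p k b"
proof -
  have "tnorm p k (\<lambda>ix. a ix + (- b ix)) \<le> tnorm p k a + tnorm p k (\<lambda>ix. - b ix)" by (rule tnorm_add)
  moreover have "tnorm p k (\<lambda>ix. - b ix) = tnorm p k b" by (simp add: tnorm_def)
  ultimately show ?thesis by simp
qed

lemma tnorm_scale: "0 \<le> c \<Longrightarrow> tnorm p k (\<lambda>ix. c * a ix) = c * tnorm p k a"
  by (simp add: tnorm_L2 L2_set_right_distrib)

lemma tnorm_sum: "tnorm p k (\<lambda>ix. \<Sum>j\<in>J. f j ix) \<le> (\<Sum>j\<in>J. tnorm p k (f j))"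
proof (induction J rule: infinite_finite_induct)
  case (infinite A) then show ?case by (simp add: tnorm_def)
next
  case empty then show ?case by (simp add: tnorm_def)
next
  case (insert x F)
  have "tnorm p k (\<lambda>ix. \<Sum>j\<in>insert x F. f j ix) = tnorm p k (\<lambda>ix. f x ix + (\<Sum>j\<in>F. f j ix))"
    using insert by simp
  also have "\<dots> \<le> tnorm p k (f x) + tnorm p k (\<lambda>ix. \<Sum>j\<in>F. f j ix)" by (rule tnorm_add)
  finally show ?case using insert by simp
qed

lemma Mtil_ge1: "0 < M \<Longrightarrow> 1 \<le> Mtil M p"
proof -
  assume "0 < M"
  have "M ^ 0 \<le> (\<Sum>j\<le>p. M ^ j)"
    by (rule member_le_sum) (use \<open>0<M\<close> in auto)
  thus ?thesis by (simp add: Mtil_def)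
qed

lemma vnorm_le:
  assumes "\<And>i. i \<in> {1..p+1} \<Longrightarrow> \<bar>v i\<bar> \<le> \<bar>z\<bar> ^ (i - 1)" and "\<bar>z\<bar> \<le> M"
  shows "vnorm p v \<le> Mtil M p"
proof -
  have "vnorm p v \<le> (\<Sum>i\<in>{1..p+1}. \<bar>v i\<bar>)" unfolding vnorm_def by (rule L2_set_le_sum_abs)
  also have "\<dots> \<le> (\<Sum>i\<in>{1..p+1}. M ^ (i - 1))"
  proof (rule sum_mono)
    fix i assume i: "i \<in> {1..p+1}"
    have "\<bar>z\<bar> ^ (i - 1) \<le> M ^ (i - 1)" by (rule power_mono[OF assms(2)]) simp
    thus "\<bar>v i\<bar> \<le> M ^ (i - 1)" using assms(1)[OF i] by linarith
  qed
  also have "\<dots> = Mtil M p"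
  proof -
    have "(\<Sum>i\<in>{0+1..p+1}. M ^ (i - 1)) = (\<Sum>j\<in>{0..p}. M ^ (j + 1 - 1))"
      by (rule sum.shift_bounds_cl_nat_ivl)
    thus ?thesis by (simp add: Mtil_def atMost_atLeast0)
  qed
  finally show ?thesis .
qed

lemma vnorm_ztil: assumes "\<bar>z\<bar> \<le> M" shows "vnorm p (ztil p z) \<le> Mtil M p"
proof (rule vnorm_le[where z=z and M=M])
  fix i assume "i \<in> {1..p+1}"
  then show "\<bar>ztil p z i\<bar> \<le> \<bar>z\<bar> ^ (i - 1)" by (simp add: ztil_def power_abs)
qed (rule assms)

definition prodT :: "(nat \<Rightarrow> real) list \<Rightarrow> nat list \<Rightarrow> real" where
  "prodT vs ix = (if length ix = length vs then (\<Prod>k<length vs. (vs!k) (ix!k)) else 0)"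

definition e1 :: "nat \<Rightarrow> real" where "e1 i = (if i = 1 then 1 else 0)"
definition wI :: "nat set \<Rightarrow> real \<Rightarrow> nat \<Rightarrow> real" where
  "wI I0 z i = (if i \<in> I0 then z ^ (i - 1) else 0)"

lemma tprod_prodT: "tprod (prodT vs) v = prodT (vs @ [v])"
proof (rule ext)
  fix ix
  show "tprod (prodT vs) v ix = prodT (vs @ [v]) ix"
  proof (cases ix rule: rev_exhaust)
    case Nil then show ?thesis by (simp add: tprod_def prodT_def)
  next
    case (snoc xs i)
    show ?thesis
    proof (cases "length xs = length vs")
      case True
      have "(\<Prod>k<length vs. ((vs @ [v]) ! k) ((xs @ [i]) ! k)) = (\<Prod>k<length vs. (vs ! k) (xs ! k))"
        by (rule prod.cong) (auto simp: nth_append True)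
      then show ?thesis using True snoc by (simp add: tprod_def prodT_def nth_append)
    next
      case False
      then show ?thesis using snoc by (simp add: tprod_def prodT_def)
    qed
  qed
qed

lemma pi_low_prodT: "pi_low (prodT (v # vs)) = (\<lambda>ix. v 1 * prodT vs ix)"
  by (rule ext) (simp add: pi_low_def prodT_def prod.lessThan_Suc_shift del: prod.lessThan_Suc)

lemma e1_1[simp]: "e1 1 = 1" by (simp add: e1_def)
lemma ztil_1[simp]: "ztil p z 1 = 1" by (simp add: ztil_def)
lemma e1_1'[simp]: "e1 (Suc 0) = 1" by (simp add: e1_def)
lemma ztil_1'[simp]: "ztil p z (Suc 0) = 1" by (simp add: ztil_def)

lemma prodT_Nil: "prodT [] = (\<lambda>ix. if ix = [] then 1 else 0)"
  by (rule ext) (simp add: prodT_def)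

lemma idx_0: "idx p 0 = {[]}" by (auto simp: idx_def)

lemma tnorm_prodT: "tnorm p (length vs) (prodT vs) = (\<Prod>v\<leftarrow>vs. vnorm p v)"
proof (induction vs rule: rev_induct)
  case Nil
  show ?case by (simp add: prodT_Nil idx_0 tnorm_def)
next
  case (snoc v vs)
  have "tnorm p (length (vs @ [v])) (prodT (vs @ [v])) = tnorm p (Suc (length vs)) (tprod (prodT vs) v)"
    by (simp add: tprod_prodT)
  also have "\<dots> = tnorm p (length vs) (prodT vs) * vnorm p v" by (rule tnorm_tprod)
  finally show ?case using snoc by simp
qed

lemma prod_list_le_pow:
  assumes "\<And>v. v \<in> set vs \<Longrightarrow> 0 \<le> f v \<and> f v \<le> (B::real)"
  shows "(\<Prod>v\<leftarrow>vs. f v) \<le> B ^ length vs"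
  using assms
proof (induction vs)
  case Nil then show ?case by simp
next
  case (Cons a vs)
  have h: "0 \<le> f a" "f a \<le> B" using Cons.prems by auto
  have "(\<Prod>v\<leftarrow>vs. f v) \<le> B ^ length vs" using Cons by auto
  moreover have "0 \<le> (\<Prod>v\<leftarrow>vs. f v)" using Cons.prems by (intro prod_list_nonneg) auto
  ultimately show ?case using h by (simp add: mult_mono)
qed

lemma vnorm_nonneg[simp]: "0 \<le> vnorm p v" by (simp add: vnorm_def)

lemma vnorm_e1: "vnorm p e1 = 1"
proof -
  have "(\<Sum>i\<in>{1..p+1}. (e1 i)\<^sup>2) = (\<Sum>i\<in>{1..p+1}. if i = 1 then 1 else 0)"
    by (rule sum.cong) (auto simp: e1_def)
  also have "\<dots> = 1" by (simp add: sum.delta)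
  finally show ?thesis by (simp add: vnorm_def L2_set_def)
qed

lemma prod_ind: fixes n :: nat shows "(\<Prod>k<n. if P k then 1 else 0 :: real) = (if \<forall>k<n. P k then 1 else 0)"
  by (induction n) (auto simp: less_Suc_eq)

lemma zhat0_prodT: "zhat0 l I0 z = prodT (replicate l e1 @ [wI I0 z])"
proof (rule ext)
  fix ix
  show "zhat0 l I0 z ix = prodT (replicate l e1 @ [wI I0 z]) ix"
  proof (cases "length ix = Suc l")
    case True
    have "(\<Prod>k<l. ((replicate l e1 @ [wI I0 z]) ! k) (ix ! k)) = (\<Prod>k<l. if ix ! k = 1 then 1 else 0)"
      by (rule prod.cong) (auto simp: nth_append e1_def)
    then have "prodT (replicate l e1 @ [wI I0 z]) ix = (if \<forall>k<l. ix ! k = 1 then 1 else 0) * wI I0 z (ix ! l)"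
      using True unfolding prodT_def by (simp add: prod_ind nth_append)
    then show ?thesis using True by (auto simp add: zhat0_def wI_def)
  next
    case False then show ?thesis by (simp add: prodT_def zhat0_def)
  qed
qed

lemma vnorm_wI: "\<bar>z\<bar> \<le> M \<Longrightarrow> vnorm p (wI I0 z) \<le> Mtil M p"
  by (rule vnorm_le[where z=z and M=M]) (auto simp: wI_def power_abs)

lemma tnorm_zhat0: assumes "\<bar>z\<bar> \<le> M" shows "tnorm p (Suc l) (zhat0 l I0 z) \<le> Mtil M p"
proof -
  have "tnorm p (Suc l) (zhat0 l I0 z) = tnorm p (length (replicate l e1 @ [wI I0 z])) (prodT (replicate l e1 @ [wI I0 z]))"
    by (simp add: zhat0_prodT)
  also have "\<dots> = vnorm p (wI I0 z)" by (simp only: tnorm_prodT) (simp add: vnorm_e1)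
  finally show ?thesis using vnorm_wI[OF assms] by simp
qed

lemma zhat_prodT: "zhat p l z t = prodT (map (\<lambda>r. ztil p (z (t - int l + int r))) [0..<Suc l])"
proof (rule ext)
  fix ix
  show "zhat p l z t ix = prodT (map (\<lambda>r. ztil p (z (t - int l + int r))) [0..<Suc l]) ix"
  proof (cases "length ix = Suc l")
    case False then show ?thesis by (simp add: prodT_def zhat_def idx_def)
  next
    case True
    have P: "prodT (map (\<lambda>r. ztil p (z (t - int l + int r))) [0..<Suc l]) ix
        = (\<Prod>r<Suc l. ztil p (z (t - int l + int r)) (ix ! r))"
      using True unfolding prodT_def by (simp del: upt_Suc prod.lessThan_Suc)
    show ?thesis
    proof (cases "ix \<in> idx p (Suc l)")
      case True2: True
      then have S: "set ix \<subseteq> {1..p+1}" by (simp add: idx_def)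
      have "\<forall>r<Suc l. ix ! r \<in> {1..p+1}" using S True by (metis nth_mem subsetD)
      then have "(\<Prod>r<Suc l. ztil p (z (t - int l + int r)) (ix ! r)) = (\<Prod>r<Suc l. (z (t - int l + int r)) ^ (ix ! r - 1))"
        by (intro prod.cong) (auto simp: ztil_def)
      then show ?thesis using P True2 by (simp add: zhat_def)
    next
      case False2: False
      have "\<not> set ix \<subseteq> {1..p+1}" using False2 True unfolding idx_def by blast
      then obtain x where x: "x \<in> set ix" "x \<notin> {1..p+1}" by blast
      then obtain r where r0: "r < length ix" "ix ! r = x" by (metis in_set_conv_nth)
      then have r: "r < Suc l" "ix ! r \<notin> {1..p+1}" using True x by auto
      have "(\<Prod>r<Suc l. ztil p (z (t - int l + int r)) (ix ! r)) = 0"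
        using r by (intro prod_zero) (auto simp: ztil_def intro!: bexI[of _ r])
      then show ?thesis using P False2 by (simp add: zhat_def)
    qed
  qed
qed

lemma Psi_prodT: "r \<le> l \<Longrightarrow> Psi p l I0 z s j r =
   prodT (replicate (l - r) e1 @ wI I0 (z (s - int j)) # map (\<lambda>k. ztil p (z (s - int j + int (Suc k)))) [0..<r])"
proof (induction r)
  case 0 then show ?case by (simp add: zhat0_prodT)
next
  case (Suc r)
  have rl: "l - r = Suc (l - Suc r)" using Suc.prems by simp
  have "Psi p l I0 z s j (Suc r) = tprod (pi_low (Psi p l I0 z s j r)) (ztil p (z (s - int j + int (Suc r))))"
    by simp
  also have "pi_low (Psi p l I0 z s j r) = prodT (replicate (l - Suc r) e1 @ wI I0 (z (s - int j)) # map (\<lambda>k. ztil p (z (s - int j + int (Suc k)))) [0..<r])"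
    using Suc by (simp add: rl pi_low_prodT)
  finally show ?case by (simp add: tprod_prodT)
qed

lemma Psi_top: assumes "1 \<in> I0"
  shows "Psi p l I0 z s j (Suc l) = zhat p l z (s - int j + int l + 1)"
proof -
  have "Psi p l I0 z s j (Suc l) = tprod (pi_low (Psi p l I0 z s j l)) (ztil p (z (s - int j + int (Suc l))))"
    by simp
  also have "pi_low (Psi p l I0 z s j l) = prodT (map (\<lambda>k. ztil p (z (s - int j + int (Suc k)))) [0..<l])"
    using assms by (simp add: Psi_prodT pi_low_prodT wI_def)
  finally have "Psi p l I0 z s j (Suc l) = prodT (map (\<lambda>k. ztil p (z (s - int j + int (Suc k)))) [0..<Suc l])"
    by (simp add: tprod_prodT)
  also have "map (\<lambda>k. ztil p (z (s - int j + int (Suc k)))) [0..<Suc l]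
      = map (\<lambda>r. ztil p (z ((s - int j + int l + 1) - int l + int r))) [0..<Suc l]"
    by (rule map_cong) (simp_all add: algebra_simps)
  finally show ?thesis by (simp add: zhat_prodT)
qed

lemma Psi_shift: "Psi p l I0 z s j r = Psi p l I0 z (s + 1) (Suc j) r"
  by (induction r) (simp_all add: algebra_simps)

lemma R1: "tprod (pi_low (zhat p l z (t - 1))) (ztil p (z t)) = zhat p l z t"
proof -
  have m: "map (\<lambda>r. ztil p (z (t - 1 - int l + int r))) [0..<Suc l]
     = ztil p (z (t - 1 - int l)) # map (\<lambda>r. ztil p (z (t - int l + int r))) [0..<l]"
    by (simp only: map_upt_Suc) (simp add: algebra_simps)
  have "pi_low (zhat p l z (t - 1)) = prodT (map (\<lambda>r. ztil p (z (t - int l + int r))) [0..<l])"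
    by (simp only: zhat_prodT m pi_low_prodT ztil_1 mult_1 )
  then have "tprod (pi_low (zhat p l z (t - 1))) (ztil p (z t)) = prodT (map (\<lambda>r. ztil p (z (t - int l + int r))) [0..<l] @ [ztil p (z t)])"
    by (simp add: tprod_prodT del: upt_Suc)
  then show ?thesis by (simp add: zhat_prodT)
qed

lemma R2: "tprod (pi_low (Phi p l I0 j z (t - 1))) (ztil p (z t)) = Phi p l I0 (Suc j) z t"
proof -
  have "tprod (pi_low (Phi p l I0 j z (t - 1))) (ztil p (z t)) = Psi p l I0 z (t - 1) j (Suc j)"
    by (simp add: Phi_def)
  also have "\<dots> = Psi p l I0 z (t - 1 + 1) (Suc j) (Suc j)" by (rule Psi_shift)
  finally show ?thesis by (simp add: Phi_def)
qed

lemma R3: assumes "1 \<in> I0"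
  shows "tprod (pi_low (Phi p l I0 l z (t - 1))) (ztil p (z t)) = zhat p l z t"
proof -
  have "tprod (pi_low (Phi p l I0 l z (t - 1))) (ztil p (z t)) = Psi p l I0 z (t - 1) l (Suc l)"
    by (simp add: Phi_def)
  also have "\<dots> = zhat p l z (t - 1 - int l + int l + 1)" by (rule Psi_top[OF assms])
  finally show ?thesis by simp
qed

lemma tens_tprod:
  assumes "a \<in> tens p k" "\<And>i. i \<notin> {1..p+1} \<Longrightarrow> v i = 0"
  shows "tprod a v \<in> tens p (Suc k)"
  unfolding tens_def
proof (intro CollectI allI impI)
  fix ix assume ix: "ix \<notin> idx p (Suc k)"
  show "tprod a v ix = 0"
  proof (cases ix rule: rev_exhaust)
    case Nil then show ?thesis by (simp add: tprod_def)
  next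
    case (snoc xs i)
    show ?thesis
    proof (cases "xs \<in> idx p k")
      case True
      then have "i \<notin> {1..p+1}" using ix snoc by (auto simp: idx_def)
      then show ?thesis using snoc assms(2) by (simp add: tprod_def)
    next
      case False
      then have "a xs = 0" using assms(1) by (simp add: tens_def)
      then show ?thesis using snoc by (simp add: tprod_def)
    qed
  qed
qed

lemma tens_pi_low: "a \<in> tens p (Suc k) \<Longrightarrow> pi_low a \<in> tens p k"
  by (auto simp: tens_def pi_low_def idx_def)

lemma ztil_out: "i \<notin> {1..p+1} \<Longrightarrow> ztil p z i = 0" unfolding ztil_def by auto

lemma Mtil_nonneg: "0 \<le> M \<Longrightarrow> 0 \<le> Mtil M p" by (simp add: Mtil_def sum_nonneg)

lemma tens_step: "a \<in> tens p (Suc k) \<Longrightarrow> tprod (pi_low a) (ztil p z) \<in> tens p (Suc k)"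
  by (intro tens_tprod tens_pi_low) (auto simp: ztil_out)

lemma tens_zhat0: "I0 \<subseteq> {1..p+1} \<Longrightarrow> zhat0 l I0 z \<in> tens p (Suc l)"
  unfolding tens_def
proof (intro CollectI allI impI)
  fix ix assume I: "I0 \<subseteq> {1..p+1}" and ix: "ix \<notin> idx p (Suc l)"
  show "zhat0 l I0 z ix = 0"
  proof (rule ccontr)
    assume "zhat0 l I0 z ix \<noteq> 0"
    then have h: "length ix = Suc l" "\<forall>r<l. ix ! r = 1" "ix ! l \<in> I0"
      by (auto simp: zhat0_def split: if_splits)
    have "\<forall>r<length ix. ix ! r \<in> {1..p+1}"
    proof (intro allI impI)
      fix r assume "r < length ix"
      then have "r < l \<or> r = l" using h by auto
      then show "ix ! r \<in> {1..p+1}" using h I by auto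
    qed
    then have "set ix \<subseteq> {1..p+1}" by (auto simp: in_set_conv_nth)
    then show False using ix h by (simp add: idx_def)
  qed
qed

lemma tens_zhat: "zhat p l z t \<in> tens p (Suc l)"
  by (simp add: tens_def zhat_def)

lemma tens_lin: "a \<in> tens p k \<Longrightarrow> (\<And>j. j \<in> J \<Longrightarrow> b j \<in> tens p k) \<Longrightarrow>
   (\<lambda>ix. c * a ix + (\<Sum>j\<in>J. g j * b j ix)) \<in> tens p k"
  by (simp add: tens_def)

lemma tens_add: "a \<in> tens p k \<Longrightarrow> b \<in> tens p k \<Longrightarrow> (\<lambda>ix. c * a ix + b ix) \<in> tens p k"
  by (simp add: tens_def)

lemma tens_Psi: "I0 \<subseteq> {1..p+1} \<Longrightarrow> Psi p l I0 z t j r \<in> tens p (Suc l)"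
  by (induction r) (simp_all add: tens_zhat0 tens_step)

lemma FSig_diff: "(\<lambda>ix. FSig lam p l I0 x1 z ix - FSig lam p l I0 x2 z ix)
   = (\<lambda>ix. lam * tprod (pi_low (\<lambda>ix. x1 ix - x2 ix)) (ztil p z) ix)"
  by (rule ext) (simp add: FSig_def tprod_def pi_low_def algebra_simps)

lemma step_norm:
  assumes "\<bar>z\<bar> \<le> M"
  shows "tnorm p (Suc l) (tprod (pi_low a) (ztil p z)) \<le> tnorm p (Suc l) a * Mtil M p"
proof -
  have "tnorm p (Suc l) (tprod (pi_low a) (ztil p z)) = tnorm p l (pi_low a) * vnorm p (ztil p z)"
    by (rule tnorm_tprod)
  also have "\<dots> \<le> tnorm p (Suc l) a * Mtil M p"
    by (intro mult_mono tnorm_pi_low vnorm_ztil assms) simp_all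
  finally show ?thesis .
qed

lemma contraction:
  assumes "0 \<le> lam" "\<bar>z\<bar> \<le> M"
  shows "tnorm p (l+1) (\<lambda>ix. FSig lam p l I0 x1 z ix - FSig lam p l I0 x2 z ix)
              \<le> lam * Mtil M p * tnorm p (l+1) (\<lambda>ix. x1 ix - x2 ix)"
proof -
  have "tnorm p (Suc l) (\<lambda>ix. FSig lam p l I0 x1 z ix - FSig lam p l I0 x2 z ix)
     = lam * tnorm p (Suc l) (tprod (pi_low (\<lambda>ix. x1 ix - x2 ix)) (ztil p z))"
    by (simp add: FSig_diff tnorm_scale assms(1))
  also have "\<dots> \<le> lam * (tnorm p (Suc l) (\<lambda>ix. x1 ix - x2 ix) * Mtil M p)"
    by (intro mult_left_mono step_norm assms)
  finally show ?thesis by (simp add: algebra_simps)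
qed

lemma invariance:
  assumes "0 \<le> lam" "\<bar>z\<bar> \<le> M" "x \<in> tens p (l+1)" "I0 \<subseteq> {1..p+1}"
    and "tnorm p (l+1) x \<le> L" and L: "lam * L * Mtil M p + Mtil M p \<le> L"
  shows "FSig lam p l I0 x z \<in> tens p (l+1) \<and> tnorm p (l+1) (FSig lam p l I0 x z) \<le> L"
proof
  have F: "FSig lam p l I0 x z = (\<lambda>ix. lam * tprod (pi_low x) (ztil p z) ix + zhat0 l I0 z ix)"
    by (simp add: FSig_def)
  show "FSig lam p l I0 x z \<in> tens p (l+1)"
    unfolding F using assms by (intro tens_add) (simp_all add: tens_step tens_zhat0)
  have "tnorm p (Suc l) (FSig lam p l I0 x z) \<le> tnorm p (Suc l) (\<lambda>ix. lam * tprod (pi_low x) (ztil p z) ix) + tnorm p (Suc l) (zhat0 l I0 z)"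
    unfolding F by (rule tnorm_add)
  also have "\<dots> \<le> lam * (tnorm p (Suc l) x * Mtil M p) + Mtil M p"
  proof -
    have a1: "tnorm p (Suc l) (\<lambda>ix. lam * tprod (pi_low x) (ztil p z) ix) = lam * tnorm p (Suc l) (tprod (pi_low x) (ztil p z))"
      by (simp add: tnorm_scale assms)
    have a2: "lam * tnorm p (Suc l) (tprod (pi_low x) (ztil p z)) \<le> lam * (tnorm p (Suc l) x * Mtil M p)"
      by (intro mult_left_mono step_norm assms)
    have a3: "tnorm p (Suc l) (zhat0 l I0 z) \<le> Mtil M p" by (rule tnorm_zhat0[OF assms(2)])
    show ?thesis using a1 a2 a3 by linarith
  qed
  also have "\<dots> \<le> lam * L * Mtil M p + Mtil M p"
  proof -
    have "0 \<le> Mtil M p" using assms(2) by (simp add: Mtil_def sum_nonneg)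
    then have "lam * (tnorm p (Suc l) x * Mtil M p) \<le> lam * (L * Mtil M p)"
      using assms by (intro mult_left_mono mult_right_mono) simp_all
    then show ?thesis by simp
  qed
  finally show "tnorm p (l+1) (FSig lam p l I0 x z) \<le> L" using L by simp
qed

lemma tnorm_Psi:
  assumes "\<And>s. \<bar>z s\<bar> \<le> M"
  shows "tnorm p (Suc l) (Psi p l I0 z t j r) \<le> Mtil M p ^ Suc r"
proof (induction r)
  case 0 then show ?case using tnorm_zhat0[OF assms] by simp
next
  case (Suc r)
  have "tnorm p (Suc l) (Psi p l I0 z t j (Suc r)) \<le> tnorm p (Suc l) (Psi p l I0 z t j r) * Mtil M p"
    by (simp only: Psi.simps) (rule step_norm[OF assms])
  also have "\<dots> \<le> Mtil M p ^ Suc r * Mtil M p"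
  proof (rule mult_right_mono)
    show "tnorm p (Suc l) (Psi p l I0 z t j r) \<le> Mtil M p ^ Suc r" by (rule Suc)
    have "0 \<le> M" using assms[of 0] by linarith
    then show "0 \<le> Mtil M p" by (rule Mtil_nonneg)
  qed
  finally show ?case by (simp add: algebra_simps)
qed

lemma tnorm_zhat:
  assumes "\<And>s. \<bar>z s\<bar> \<le> M"
  shows "tnorm p (Suc l) (zhat p l z t) \<le> Mtil M p ^ Suc l"
proof -
  have "tnorm p (Suc l) (zhat p l z t) = tnorm p (length (map (\<lambda>r. ztil p (z (t - int l + int r))) [0..<Suc l])) (prodT (map (\<lambda>r. ztil p (z (t - int l + int r))) [0..<Suc l]))"
    by (simp only: zhat_prodT length_map length_upt) simp
  also have "\<dots> = (\<Prod>v\<leftarrow>map (\<lambda>r. ztil p (z (t - int l + int r))) [0..<Suc l]. vnorm p v)"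
    by (rule tnorm_prodT)
  also have "\<dots> \<le> Mtil M p ^ length (map (\<lambda>r. ztil p (z (t - int l + int r))) [0..<Suc l])"
    by (rule prod_list_le_pow) (auto intro: vnorm_ztil assms)
  finally show ?thesis by simp
qed

lemma KM_bound: "z \<in> KM M \<Longrightarrow> 0 < M \<Longrightarrow> \<bar>z s\<bar> \<le> M"
  unfolding KM_def by (cases "s \<le> 0") auto

lemma numeric:
  fixes lam Mt :: real
  assumes "0 < lam" "lam < 1" "1 \<le> Mt" "lam * Mt < 1"
  shows "lam ^ (l+1) / (1 - lam) * Mt ^ Suc l + (\<Sum>j\<le>l. lam ^ j * Mt ^ Suc j) \<le> Mt / (1 - lam * Mt)"
proof -
  define q where "q = lam * Mt"
  define Q where "Q = q ^ Suc l"
  have q1: "q < 1" "0 < q" using assms by (auto simp: q_def)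
  have Q0: "0 \<le> Q" using q1 by (simp add: Q_def)
  have "(\<Sum>j\<le>l. lam ^ j * Mt ^ Suc j) = Mt * (\<Sum>j\<le>l. q ^ j)"
    by (simp add: q_def sum_distrib_left power_mult_distrib algebra_simps)
  also have "(\<Sum>j\<le>l. q ^ j) = (1 - Q) / (1 - q)"
    using sum_gp_basic[of q l] q1 by (simp add: Q_def field_simps)
  finally have S: "(\<Sum>j\<le>l. lam ^ j * Mt ^ Suc j) = Mt * ((1 - Q) / (1 - q))" .
  have A: "lam ^ (l+1) / (1 - lam) * Mt ^ Suc l = Q / (1 - lam)"
    by (simp add: Q_def q_def power_mult_distrib)
  have key: "Q / (1 - lam) \<le> Mt * Q / (1 - q)"
  proof -
    have "1 - q \<le> Mt * (1 - lam)" using assms by (simp add: q_def algebra_simps)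
    then have "Q * (1 - q) \<le> Mt * Q * (1 - lam)" using Q0
      by (metis mult.assoc mult.commute mult_left_mono)
    then show ?thesis using q1 assms by (simp add: field_simps)
  qed
  have "Mt * Q / (1 - q) + Mt * ((1 - Q) / (1 - q)) = (Mt * Q + Mt * (1 - Q)) / (1 - q)"
    by (simp add: add_divide_distrib)
  also have "\<dots> = Mt / (1 - q)" by (simp add: algebra_simps)
  finally have D: "Mt / (1 - q) = Mt * Q / (1 - q) + Mt * ((1 - Q) / (1 - q))" by simp
  have "lam ^ (l+1) / (1 - lam) * Mt ^ Suc l + (\<Sum>j\<le>l. lam ^ j * Mt ^ Suc j) \<le> Mt / (1 - q)"
    unfolding A S using key D by linarith
  then show ?thesis by (simp add: q_def)
qed

lemma lin_step: "tprod (pi_low (\<lambda>ix. A * a ix + (\<Sum>j\<in>J. g j * b j ix))) v ix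
   = A * tprod (pi_low a) v ix + (\<Sum>j\<in>J. g j * tprod (pi_low (b j)) v ix)"
  by (simp add: tprod_def pi_low_def sum_distrib_right ring_distribs mult.assoc)

lemma USig_nonpos: "\<not> 0 < t \<Longrightarrow> USig lam p l I0 z t =
   (\<lambda>ix. lam ^ (l + 1) / (1 - lam) * zhat p l z t ix + (\<Sum>j\<le>l. lam ^ j * Phi p l I0 j z t ix))"
  by (simp add: USig_def)

lemma USig_rec:
  assumes "1 \<in> I0" "lam < 1" "t \<le> 0"
  shows "USig lam p l I0 z t = FSig lam p l I0 (USig lam p l I0 z (t - 1)) (z t)"
proof (rule ext)
  fix ix
  define A where "A = lam ^ (l + 1) / (1 - lam)"
  have U1: "USig lam p l I0 z (t - 1) = (\<lambda>ix. A * zhat p l z (t - 1) ix + (\<Sum>j\<le>l. lam ^ j * Phi p l I0 j z (t - 1) ix))"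
    using assms(3) by (simp add: USig_nonpos A_def)
  have F0: "FSig lam p l I0 (USig lam p l I0 z (t - 1)) (z t) ix
     = lam * tprod (pi_low (USig lam p l I0 z (t - 1))) (ztil p (z t)) ix + zhat0 l I0 (z t) ix"
    by (simp add: FSig_def)
  have F1: "tprod (pi_low (USig lam p l I0 z (t - 1))) (ztil p (z t)) ix
     = A * zhat p l z t ix + (\<Sum>j\<le>l. lam ^ j * tprod (pi_low (Phi p l I0 j z (t - 1))) (ztil p (z t)) ix)"
    by (simp only: U1 lin_step R1)
  have e1: "(\<Sum>j\<le>l. lam ^ j * tprod (pi_low (Phi p l I0 j z (t - 1))) (ztil p (z t)) ix) = (\<Sum>j<l. lam ^ j * Phi p l I0 (Suc j) z t ix) + lam ^ l * zhat p l z t ix"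
  proof -
    have "(\<Sum>j\<le>l. lam ^ j * tprod (pi_low (Phi p l I0 j z (t - 1))) (ztil p (z t)) ix)
       = (\<Sum>j<l. lam ^ j * tprod (pi_low (Phi p l I0 j z (t - 1))) (ztil p (z t)) ix) + lam ^ l * tprod (pi_low (Phi p l I0 l z (t - 1))) (ztil p (z t)) ix"
      by (simp add: lessThan_Suc_atMost[symmetric])
    moreover have "(\<Sum>j<l. lam ^ j * tprod (pi_low (Phi p l I0 j z (t - 1))) (ztil p (z t)) ix) = (\<Sum>j<l. lam ^ j * Phi p l I0 (Suc j) z t ix)"
      by (rule sum.cong) (simp_all add: R2)
    ultimately show ?thesis by (simp add: R3[OF assms(1)])
  qed
  have e2: "(\<Sum>j\<le>l. lam ^ j * Phi p l I0 j z t ix) = zhat0 l I0 (z t) ix + (\<Sum>j<l. lam ^ Suc j * Phi p l I0 (Suc j) z t ix)"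
    by (simp add: lessThan_Suc_atMost[symmetric] sum.lessThan_Suc_shift Phi_def del: sum.lessThan_Suc)
  have e3: "(\<Sum>j<l. lam ^ Suc j * Phi p l I0 (Suc j) z t ix) = lam * (\<Sum>j<l. lam ^ j * Phi p l I0 (Suc j) z t ix)"
    by (simp add: sum_distrib_left algebra_simps)
  have e4: "A = lam * A + lam * lam ^ l"
    using assms(2) by (simp add: A_def field_simps)
  have "USig lam p l I0 z t ix = A * zhat p l z t ix + (\<Sum>j\<le>l. lam ^ j * Phi p l I0 j z t ix)"
    using assms(3) by (simp add: USig_nonpos A_def)
  also have "\<dots> = (lam * A + lam * lam ^ l) * zhat p l z t ix + zhat0 l I0 (z t) ix + lam * (\<Sum>j<l. lam ^ j * Phi p l I0 (Suc j) z t ix)"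
    using e2 e3 e4 by simp
  also have "\<dots> = FSig lam p l I0 (USig lam p l I0 z (t - 1)) (z t) ix"
    using F0 F1 e1 by (simp add: algebra_simps)
  finally show "USig lam p l I0 z t ix = FSig lam p l I0 (USig lam p l I0 z (t - 1)) (z t) ix" .
qed

lemma USig_bound:
  assumes "0 < lam" "lam < 1" "1 \<le> Mtil M p" "lam * Mtil M p < 1" "I0 \<subseteq> {1..p+1}"
    and zb: "\<And>s. \<bar>z s\<bar> \<le> M" and "t \<le> 0"
  shows "USig lam p l I0 z t \<in> tens p (l+1) \<and> tnorm p (l+1) (USig lam p l I0 z t) \<le> Mtil M p / (1 - lam * Mtil M p)"
proof
  define A where "A = lam ^ (l + 1) / (1 - lam)"
  have A0: "0 \<le> A" using assms by (simp add: A_def)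
  have U: "USig lam p l I0 z t = (\<lambda>ix. A * zhat p l z t ix + (\<Sum>j\<le>l. lam ^ j * Phi p l I0 j z t ix))"
    using assms(7) by (simp add: USig_nonpos A_def)
  show "USig lam p l I0 z t \<in> tens p (l+1)"
    unfolding U by (rule tens_lin) (simp_all add: tens_zhat Phi_def tens_Psi[OF assms(5)])
  have "tnorm p (Suc l) (USig lam p l I0 z t) \<le> tnorm p (Suc l) (\<lambda>ix. A * zhat p l z t ix) + tnorm p (Suc l) (\<lambda>ix. \<Sum>j\<le>l. lam ^ j * Phi p l I0 j z t ix)"
    unfolding U by (rule tnorm_add)
  also have "\<dots> \<le> A * Mtil M p ^ Suc l + (\<Sum>j\<le>l. lam ^ j * Mtil M p ^ Suc j)"
  proof (rule add_mono)
    show "tnorm p (Suc l) (\<lambda>ix. A * zhat p l z t ix) \<le> A * Mtil M p ^ Suc l"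
      using mult_left_mono[OF tnorm_zhat[OF zb] A0] by (simp add: tnorm_scale[OF A0])
    have "tnorm p (Suc l) (\<lambda>ix. \<Sum>j\<le>l. lam ^ j * Phi p l I0 j z t ix) \<le> (\<Sum>j\<le>l. tnorm p (Suc l) (\<lambda>ix. lam ^ j * Phi p l I0 j z t ix))"
      by (rule tnorm_sum)
    also have "\<dots> \<le> (\<Sum>j\<le>l. lam ^ j * Mtil M p ^ Suc j)"
    proof (rule sum_mono)
      fix j
      have "tnorm p (Suc l) (Phi p l I0 j z t) \<le> Mtil M p ^ Suc j"
        unfolding Phi_def by (rule tnorm_Psi[OF zb])
      then show "tnorm p (Suc l) (\<lambda>ix. lam ^ j * Phi p l I0 j z t ix) \<le> lam ^ j * Mtil M p ^ Suc j"
        using assms(1) by (simp add: tnorm_scale mult_left_mono)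
    qed
    finally show "tnorm p (Suc l) (\<lambda>ix. \<Sum>j\<le>l. lam ^ j * Phi p l I0 j z t ix) \<le> (\<Sum>j\<le>l. lam ^ j * Mtil M p ^ Suc j)" .
  qed
  also have "\<dots> \<le> Mtil M p / (1 - lam * Mtil M p)"
    unfolding A_def by (rule numeric) (use assms in auto)
  finally show "tnorm p (l+1) (USig lam p l I0 z t) \<le> Mtil M p / (1 - lam * Mtil M p)" by simp
qed

lemma cont_zhat: "continuous_on UNIV (\<lambda>z. zhat p l z t ix)"
  unfolding zhat_def by (cases "ix \<in> idx p (l+1)") (simp_all add: continuous_intros)

lemma cont_coord: "continuous_on UNIV (\<lambda>z::int \<Rightarrow> real. z s)" by simp

lemma cont_if_gen: "continuous_on S f \<Longrightarrow> continuous_on S g \<Longrightarrow> continuous_on S (\<lambda>x. if P then f x else g x)"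
  by (cases P) simp_all

lemma cont_Psi: "continuous_on UNIV (\<lambda>z. Psi p l I0 z t j r ix)"
proof (induction r arbitrary: ix)
  case 0
  show ?case unfolding Psi.simps zhat0_def
    by (intro cont_if_gen continuous_intros cont_coord)
next
  case (Suc r)
  show ?case
    unfolding Psi.simps tprod_def pi_low_def ztil_def
    by (intro cont_if_gen continuous_intros cont_coord Suc)
qed

lemma cont_USig: "continuous_on S (USig lam p l I0)"
proof -
  have "continuous_on UNIV (USig lam p l I0)"
  proof (intro continuous_on_coordinatewise_then_product)
    fix t ix
    show "continuous_on UNIV (\<lambda>z. USig lam p l I0 z t ix)"
    proof (cases "0 < t")
      case True then show ?thesis by (simp add: USig_def)
    next
      case False
      show ?thesis unfolding USig_nonpos[OF False] Phi_def
        by (intro continuous_intros cont_zhat cont_Psi)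
    qed
  qed
  then show ?thesis using continuous_on_subset by blast
qed

lemma shift_zhat: "(\<And>s. s \<le> t \<Longrightarrow> z' s = z (s - d)) \<Longrightarrow> zhat p l z' t = zhat p l z (t - d)"
  unfolding zhat_def by (intro ext if_cong refl prod.cong) (simp_all add: algebra_simps)

lemma shift_Psi: "(\<And>s. s \<le> t \<Longrightarrow> z' s = z (s - d)) \<Longrightarrow> r \<le> j \<Longrightarrow> Psi p l I0 z' t j r = Psi p l I0 z (t - d) j r"
proof (induction r)
  case 0 then show ?case by (simp add: algebra_simps)
next
  case (Suc r)
  then have "z' (t - int j + int (Suc r)) = z (t - d - int j + int (Suc r))" by (simp add: algebra_simps)
  then show ?case using Suc by simp
qed

lemma uniq:
  fixes F :: "(nat list \<Rightarrow> real) \<Rightarrow> real \<Rightarrow> nat list \<Rightarrow> real"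
  assumes c: "0 \<le> c" "c < 1"
    and contr: "\<And>x1 x2 w. x1 \<in> tens p k \<Longrightarrow> x2 \<in> tens p k \<Longrightarrow> \<bar>w\<bar> \<le> M \<Longrightarrow>
        tnorm p k (\<lambda>ix. F x1 w ix - F x2 w ix) \<le> c * tnorm p k (\<lambda>ix. x1 ix - x2 ix)"
    and zb: "\<And>s. \<bar>z s\<bar> \<le> M"
    and sx: "is_solution F p k L z x" and sy: "is_solution F p k L z y"
  shows "x = y"
proof (rule ext)
  fix t
  have xK: "x \<in> KL p k L" and xr: "\<And>t. t \<le> 0 \<Longrightarrow> x t = F (x (t - 1)) (z t)"
    using sx unfolding is_solution_def by blast+
  have yK: "y \<in> KL p k L" and yr: "\<And>t. t \<le> 0 \<Longrightarrow> y t = F (y (t - 1)) (z t)"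
    using sy unfolding is_solution_def by blast+
  have bound: "\<forall>t\<le>0. tnorm p k (\<lambda>ix. x t ix - y t ix) \<le> c ^ n * (2 * L)" for n
  proof (induction n)
    case 0
    show ?case
    proof (intro allI impI)
      fix t :: int assume "t \<le> 0"
      then have "tnorm p k (x t) \<le> L" "tnorm p k (y t) \<le> L" using xK yK by (auto simp: KL_def)
      moreover have "tnorm p k (\<lambda>ix. x t ix - y t ix) \<le> tnorm p k (x t) + tnorm p k (y t)" by (rule tnorm_diff)
      ultimately show "tnorm p k (\<lambda>ix. x t ix - y t ix) \<le> c ^ 0 * (2 * L)" by simp
    qed
  next
    case (Suc n)
    show ?case
    proof (intro allI impI)
      fix t :: int assume t: "t \<le> 0"
      have tens: "x (t - 1) \<in> tens p k" "y (t - 1) \<in> tens p k" using xK yK t by (auto simp: KL_def)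
      have "tnorm p k (\<lambda>ix. x t ix - y t ix) = tnorm p k (\<lambda>ix. F (x (t - 1)) (z t) ix - F (y (t - 1)) (z t) ix)"
        by (subst xr[OF t], subst yr[OF t]) (rule refl)
      also have "\<dots> \<le> c * tnorm p k (\<lambda>ix. x (t - 1) ix - y (t - 1) ix)"
        by (rule contr[OF tens zb])
      also have "\<dots> \<le> c * (c ^ n * (2 * L))"
        using Suc t c by (intro mult_left_mono) auto
      finally show "tnorm p k (\<lambda>ix. x t ix - y t ix) \<le> c ^ Suc n * (2 * L)" by (simp add: mult.assoc)
    qed
  qed
  show "x t = y t"
  proof (cases "t \<le> 0")
    case False
    then show ?thesis using xK yK by (auto simp: KL_def)
  next
    case True
    have lim: "(\<lambda>n. c ^ n * (2 * L)) \<longlonglongrightarrow> 0"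
      using c by (intro tendsto_mult_left_zero LIMSEQ_power_zero) simp
    have "tnorm p k (\<lambda>ix. x t ix - y t ix) \<le> 0"
      by (rule LIMSEQ_le_const[OF lim]) (use bound True in auto)
    then have "tnorm p k (\<lambda>ix. x t ix - y t ix) = 0" using tnorm_nonneg[of p k] by (simp add: order_antisym)
    then have in_idx: "\<forall>ix\<in>idx p k. x t ix - y t ix = 0" by (simp add: tnorm_L2 L2_set_eq_0_iff)
    have tens: "x t \<in> tens p k" "y t \<in> tens p k" using xK yK True by (auto simp: KL_def)
    show ?thesis
    proof (rule ext)
      fix ix
      show "x t ix = y t ix"
      proof (cases "ix \<in> idx p k")
        case True then show ?thesis using in_idx by simp
      next
        case False then show ?thesis using tens by (simp add: tens_def)
      qed
    qed
  qed
qed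

theorem mainTheorem2:
  fixes M lam :: real and l p :: nat and I0 :: "nat set"
  assumes "0 < M" and "0 < lam" and "lam < min 1 (1 / Mtil M p)"
    and "I0 \<subseteq> {1..p+1}" and "1 \<in> I0" and "card I0 > 1"
  shows "(\<forall>x1\<in>tens p (l+1). \<forall>x2\<in>tens p (l+1). \<forall>z. \<bar>z\<bar> \<le> M \<longrightarrow>
            tnorm p (l+1) (\<lambda>ix. FSig lam p l I0 x1 z ix - FSig lam p l I0 x2 z ix)
              \<le> lam * Mtil M p * tnorm p (l+1) (\<lambda>ix. x1 ix - x2 ix))
       \<and> lam * Mtil M p < 1
       \<and> (\<forall>x\<in>tens p (l+1). \<forall>z. tnorm p (l+1) x \<le> Mtil M p / (1 - lam * Mtil M p) \<and> \<bar>z\<bar> \<le> M \<longrightarrow>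
            FSig lam p l I0 x z \<in> tens p (l+1)
            \<and> tnorm p (l+1) (FSig lam p l I0 x z) \<le> Mtil M p / (1 - lam * Mtil M p))
       \<and> has_ESP (FSig lam p l I0) p (l+1) (Mtil M p / (1 - lam * Mtil M p)) (KM M)
       \<and> (\<forall>z\<in>KM M. is_solution (FSig lam p l I0) p (l+1) (Mtil M p / (1 - lam * Mtil M p)) z
                       (USig lam p l I0 z))
       \<and> USig lam p l I0 ` KM M \<subseteq> KL p (l+1) (Mtil M p / (1 - lam * Mtil M p))
       \<and> continuous_on (KM M) (USig lam p l I0)
       \<and> (\<forall>z\<in>KM M. \<forall>tau. USig lam p l I0 (tshift 0 tau z) = tshift (\<lambda>ix. 0) tau (USig lam p l I0 z))"
proof -
  define L where "L = Mtil M p / (1 - lam * Mtil M p)"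
  have Mt1: "1 \<le> Mtil M p" using assms(1) by (rule Mtil_ge1)
  have lam1: "lam < 1" and lamM: "lam < 1 / Mtil M p" using assms(3) by auto
  have c1: "lam * Mtil M p < 1" using lamM Mt1 by (simp add: less_divide_eq)
  have Leq: "lam * L * Mtil M p + Mtil M p \<le> L"
  proof -
    have "L * (1 - lam * Mtil M p) = Mtil M p" using c1 by (simp add: L_def)
    then show ?thesis by (simp add: algebra_simps)
  qed
  have zb: "\<And>z s. z \<in> KM M \<Longrightarrow> \<bar>z s\<bar> \<le> M" using KM_bound assms(1) by blast
  have P1: "\<forall>x1\<in>tens p (l+1). \<forall>x2\<in>tens p (l+1). \<forall>z. \<bar>z\<bar> \<le> M \<longrightarrow>
            tnorm p (l+1) (\<lambda>ix. FSig lam p l I0 x1 z ix - FSig lam p l I0 x2 z ix)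
              \<le> lam * Mtil M p * tnorm p (l+1) (\<lambda>ix. x1 ix - x2 ix)"
  proof (intro ballI allI impI)
    fix x1 x2 z assume zM: "\<bar>z\<bar> \<le> M"
    have "0 \<le> lam" using assms(2) by simp
    from contraction[OF this zM]
    show "tnorm p (l+1) (\<lambda>ix. FSig lam p l I0 x1 z ix - FSig lam p l I0 x2 z ix)
              \<le> lam * Mtil M p * tnorm p (l+1) (\<lambda>ix. x1 ix - x2 ix)" .
  qed
  have P3: "\<forall>x\<in>tens p (l+1). \<forall>z. tnorm p (l+1) x \<le> L \<and> \<bar>z\<bar> \<le> M \<longrightarrow>
            FSig lam p l I0 x z \<in> tens p (l+1) \<and> tnorm p (l+1) (FSig lam p l I0 x z) \<le> L"
  proof (intro ballI allI impI)
    fix x z assume x: "x \<in> tens p (l+1)" and h: "tnorm p (l+1) x \<le> L \<and> \<bar>z\<bar> \<le> M"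
    have "0 \<le> lam" using assms(2) by simp
    from invariance[OF this conjunct2[OF h] x assms(4) conjunct1[OF h] Leq]
    show "FSig lam p l I0 x z \<in> tens p (l+1) \<and> tnorm p (l+1) (FSig lam p l I0 x z) \<le> L" .
  qed
  have P5: "\<forall>z\<in>KM M. is_solution (FSig lam p l I0) p (l+1) L z (USig lam p l I0 z)"
  proof
    fix z assume z: "z \<in> KM M"
    have "USig lam p l I0 z \<in> KL p (l+1) L"
      unfolding KL_def
    proof (intro CollectI allI conjI impI)
      fix t :: int assume "t \<le> 0"
      then have "USig lam p l I0 z t \<in> tens p (l+1) \<and> tnorm p (l+1) (USig lam p l I0 z t) \<le> L"
        unfolding L_def using assms(2,4) lam1 Mt1 c1 zb[OF z] by (intro USig_bound) auto
      then show "USig lam p l I0 z t \<in> tens p (l+1)" "tnorm p (l+1) (USig lam p l I0 z t) \<le> L" by auto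
    next
      fix t :: int assume "0 < t"
      then show "USig lam p l I0 z t = (\<lambda>ix. 0)" by (simp add: USig_def)
    qed
    moreover have "\<forall>t\<le>0. USig lam p l I0 z t = FSig lam p l I0 (USig lam p l I0 z (t - 1)) (z t)"
      using USig_rec[OF assms(5) lam1] by blast
    ultimately show "is_solution (FSig lam p l I0) p (l+1) L z (USig lam p l I0 z)"
      unfolding is_solution_def by blast
  qed
  have P6: "USig lam p l I0 ` KM M \<subseteq> KL p (l+1) L"
    using P5 unfolding is_solution_def by blast
  have P4: "has_ESP (FSig lam p l I0) p (l+1) L (KM M)"
    unfolding has_ESP_def
  proof
    fix z assume z: "z \<in> KM M"
    show "\<exists>!x. is_solution (FSig lam p l I0) p (l+1) L z x"
    proof (rule ex1I)
      show "is_solution (FSig lam p l I0) p (l+1) L z (USig lam p l I0 z)" using P5 z by blast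
    next
      fix y assume y: "is_solution (FSig lam p l I0) p (l+1) L z y"
      show "y = USig lam p l I0 z"
      proof (rule uniq[where c = "lam * Mtil M p" and M = M])
        show "0 \<le> lam * Mtil M p" using assms(2) Mt1 by simp
        show "lam * Mtil M p < 1" by (rule c1)
        show "\<And>x1 x2 w. x1 \<in> tens p (l+1) \<Longrightarrow> x2 \<in> tens p (l+1) \<Longrightarrow> \<bar>w\<bar> \<le> M \<Longrightarrow>
          tnorm p (l+1) (\<lambda>ix. FSig lam p l I0 x1 w ix - FSig lam p l I0 x2 w ix) \<le> lam * Mtil M p * tnorm p (l+1) (\<lambda>ix. x1 ix - x2 ix)"
          using P1 by blast
        show "\<And>s. \<bar>z s\<bar> \<le> M" using zb[OF z] .
        show "is_solution (FSig lam p l I0) p (l+1) L z y" by (rule y)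
        show "is_solution (FSig lam p l I0) p (l+1) L z (USig lam p l I0 z)" using P5 z by blast
      qed
    qed
  qed
  have P7: "continuous_on (KM M) (USig lam p l I0)" by (rule cont_USig)
  have P8: "\<forall>z\<in>KM M. \<forall>tau. USig lam p l I0 (tshift 0 tau z) = tshift (\<lambda>ix. 0) tau (USig lam p l I0 z)"
  proof (intro ballI allI)
    fix z and tau :: nat
    show "USig lam p l I0 (tshift 0 tau z) = tshift (\<lambda>ix. 0) tau (USig lam p l I0 z)"
    proof (rule ext)
    fix t :: int
    show "USig lam p l I0 (tshift 0 tau z) t = tshift (\<lambda>ix. 0) tau (USig lam p l I0 z) t"
    proof (cases "0 < t")
      case True then show ?thesis by (simp add: USig_def tshift_def)
    next
      case False
      have h: "\<And>s. s \<le> t \<Longrightarrow> tshift 0 tau z s = z (s - int tau)" using False by (simp add: tshift_def)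
      have Z: "zhat p l (tshift 0 tau z) t = zhat p l z (t - int tau)" by (rule shift_zhat[where z=z and d="int tau", OF h])
      have P: "\<And>j. Phi p l I0 j (tshift 0 tau z) t = Phi p l I0 j z (t - int tau)"
        unfolding Phi_def by (rule shift_Psi[where z=z and d="int tau", OF h]) simp_all
      have F2: "\<not> 0 < t - int tau" using False by simp
      have R: "tshift (\<lambda>ix. 0) tau (USig lam p l I0 z) t = USig lam p l I0 z (t - int tau)"
        using False by (simp add: tshift_def)
      show ?thesis unfolding R USig_nonpos[OF False] USig_nonpos[OF F2] Z P ..
    qed
    qed
  qed
  show ?thesis using P1 c1 P3 P4 P5 P6 P7 P8 unfolding L_def by blast
qed

end
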